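(* Let $G$ be an AT-free graph. Then $\operatorname{tw}(G)\le 3\Delta(G)-2$, where $\Delta(G)$ is the maximum degree of $G$.
   Context: An asteroidal triple in $G$ is an independent set of three vertices such that each pair is joined by a path avoiding the (closed) neighborhood of the third; $G$ is AT-free if it has no asteroidal triple. The treewidth $\operatorname{tw}(G)$ is the minimum, over all tree decompositions $(\{X_i\},T)$ of $G$ (a tree $T$ with vertex subsets $X_i$ at its nodes covering all vertices and all edges, such that for each vertex the nodes containing it form a connected subtree), of $\max_i|X_i|-1$. *)

theory Defs
  imports Main
begin

definition simple_graph :: "'a set \<Rightarrow> ('a \<Rightarrow> 'a \<Rightarrow> bool) \<Rightarrow> bool" where
  "simple_graph V E \<longleftrightarrow> finite V \<and> (\<forall>u v. E u v \<longrightarrow> u \<in> V \<and> v \<in> V)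
     \<and> (\<forall>u v. E u v \<longrightarrow> E v u) \<and> (\<forall>u. \<not> E u u)"

definition degree :: "'a set \<Rightarrow> ('a \<Rightarrow> 'a \<Rightarrow> bool) \<Rightarrow> 'a \<Rightarrow> nat" where
  "degree V E v = card {u \<in> V. E v u}"

text \<open>Maximum degree (0 for the empty graph).\<close>
definition max_degree :: "'a set \<Rightarrow> ('a \<Rightarrow> 'a \<Rightarrow> bool) \<Rightarrow> nat" where
  "max_degree V E = (if V = {} then 0 else Max (degree V E ` V))"

definition closed_nbhd :: "'a set \<Rightarrow> ('a \<Rightarrow> 'a \<Rightarrow> bool) \<Rightarrow> 'a \<Rightarrow> 'a set" where
  "closed_nbhd V E z = insert z {u \<in> V. E z u}"

definition path_within :: "('a \<Rightarrow> 'a \<Rightarrow> bool) \<Rightarrow> 'a set \<Rightarrow> 'a \<Rightarrow> 'a \<Rightarrow> bool" where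
  "path_within E S x y \<longleftrightarrow> x \<in> S \<and> y \<in> S \<and> (\<lambda>a b. E a b \<and> a \<in> S \<and> b \<in> S)\<^sup>*\<^sup>* x y"

definition avoids_path :: "'a set \<Rightarrow> ('a \<Rightarrow> 'a \<Rightarrow> bool) \<Rightarrow> 'a \<Rightarrow> 'a \<Rightarrow> 'a \<Rightarrow> bool" where
  "avoids_path V E x y z \<longleftrightarrow> path_within E (V - closed_nbhd V E z) x y"

definition asteroidal_triple :: "'a set \<Rightarrow> ('a \<Rightarrow> 'a \<Rightarrow> bool) \<Rightarrow> 'a \<Rightarrow> 'a \<Rightarrow> 'a \<Rightarrow> bool" where
  "asteroidal_triple V E x y z \<longleftrightarrow>
     x \<in> V \<and> y \<in> V \<and> z \<in> V \<and> x \<noteq> y \<and> y \<noteq> z \<and> x \<noteq> z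
     \<and> \<not> E x y \<and> \<not> E y z \<and> \<not> E x z
     \<and> avoids_path V E x y z \<and> avoids_path V E y z x \<and> avoids_path V E x z y"

definition AT_free :: "'a set \<Rightarrow> ('a \<Rightarrow> 'a \<Rightarrow> bool) \<Rightarrow> bool" where
  "AT_free V E \<longleftrightarrow> \<not> (\<exists>x y z. asteroidal_triple V E x y z)"

definition connected_on :: "'b set \<Rightarrow> ('b \<Rightarrow> 'b \<Rightarrow> bool) \<Rightarrow> bool" where
  "connected_on N T \<longleftrightarrow> (\<forall>a\<in>N. \<forall>b\<in>N. (\<lambda>u v. T u v \<and> u \<in> N \<and> v \<in> N)\<^sup>*\<^sup>* a b)"

definition is_cycle :: "('b \<Rightarrow> 'b \<Rightarrow> bool) \<Rightarrow> 'b list \<Rightarrow> bool" where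
  "is_cycle T cs \<longleftrightarrow> length cs \<ge> 3 \<and> distinct cs
     \<and> (\<forall>i. Suc i < length cs \<longrightarrow> T (cs ! i) (cs ! Suc i)) \<and> T (last cs) (hd cs)"

definition is_tree :: "'b set \<Rightarrow> ('b \<Rightarrow> 'b \<Rightarrow> bool) \<Rightarrow> bool" where
  "is_tree N T \<longleftrightarrow> simple_graph N T \<and> N \<noteq> {} \<and> connected_on N T
     \<and> \<not> (\<exists>cs. is_cycle T cs)"

definition tree_decomposition ::
  "'a set \<Rightarrow> ('a \<Rightarrow> 'a \<Rightarrow> bool) \<Rightarrow> nat set \<Rightarrow> (nat \<Rightarrow> nat \<Rightarrow> bool) \<Rightarrow> (nat \<Rightarrow> 'a set) \<Rightarrow> bool" where
  "tree_decomposition V E N T X \<longleftrightarrow> is_tree N T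
     \<and> (\<Union>n\<in>N. X n) = V
     \<and> (\<forall>u v. E u v \<longrightarrow> (\<exists>n\<in>N. u \<in> X n \<and> v \<in> X n))
     \<and> (\<forall>v\<in>V. connected_on {n \<in> N. v \<in> X n} T)"

definition decomposition_width :: "nat set \<Rightarrow> (nat \<Rightarrow> 'a set) \<Rightarrow> nat" where
  "decomposition_width N X = Max ((\<lambda>n. card (X n)) ` N) - 1"

definition treewidth :: "'a set \<Rightarrow> ('a \<Rightarrow> 'a \<Rightarrow> bool) \<Rightarrow> nat" where
  "treewidth V E = (LEAST w. \<exists>N T X. tree_decomposition V E N T X \<and> decomposition_width N X = w)"

end

theory Submission
  imports Defs
begin

definition pathT :: "nat \<Rightarrow> nat \<Rightarrow> nat \<Rightarrow> bool" where
  "pathT n i j \<longleftrightarrow> i < n \<and> j < n \<and> (Suc i = j \<or> Suc j = i)"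

lemma interval_conn:
  assumes conv: "\<And>a b j. a \<in> S \<Longrightarrow> b \<in> S \<Longrightarrow> a \<le> j \<Longrightarrow> j \<le> b \<Longrightarrow> j \<in> S"
    and S: "S \<subseteq> {..<n}"
  shows "a \<in> S \<Longrightarrow> b \<in> S \<Longrightarrow> (\<lambda>u v. pathT n u v \<and> u \<in> S \<and> v \<in> S)\<^sup>*\<^sup>* a b"
proof -
  let ?R = "(\<lambda>u v. pathT n u v \<and> u \<in> S \<and> v \<in> S)"
  have up: "?R\<^sup>*\<^sup>* a (a + d) \<and> ?R\<^sup>*\<^sup>* (a + d) a" if "a \<in> S" "a + d \<in> S" for a d
    using that
  proof (induction d)
    case 0 then show ?case by simp
  next
    case (Suc d)
    have "a + d \<in> S" using conv[of a "a + Suc d" "a + d"] Suc.prems by simp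
    with Suc.IH Suc.prems have ih: "?R\<^sup>*\<^sup>* a (a + d)" "?R\<^sup>*\<^sup>* (a + d) a" by auto
    have e1: "?R (a + d) (a + Suc d)" "?R (a + Suc d) (a + d)"
      using Suc.prems \<open>a + d \<in> S\<close> S by (auto simp: pathT_def)
    show ?case using rtranclp.rtrancl_into_rtrancl[OF ih(1) e1(1)]
        converse_rtranclp_into_rtranclp[OF e1(2) ih(2)] by simp
  qed
  assume "a \<in> S" "b \<in> S"
  show "?R\<^sup>*\<^sup>* a b"
  proof (cases "a \<le> b")
    case True
    then obtain d where "b = a + d" using le_Suc_ex by blast
    then show ?thesis using up \<open>a \<in> S\<close> \<open>b \<in> S\<close> by blast
  next
    case False
    then obtain d where "a = b + d" using le_Suc_ex[of b a] by auto
    then show ?thesis using up \<open>a \<in> S\<close> \<open>b \<in> S\<close> by blast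
  qed
qed

lemma pathT_no_cycle: "\<not> is_cycle (pathT n) cs"
proof
  assume c: "is_cycle (pathT n) cs"
  let ?L = "length cs"
  have L3: "?L \<ge> 3" and dist: "distinct cs"
    and st: "\<And>i. Suc i < ?L \<Longrightarrow> pathT n (cs ! i) (cs ! Suc i)"
    and lh: "pathT n (last cs) (hd cs)" using c by (auto simp: is_cycle_def)
  have ne: "cs \<noteq> []" using L3 by auto
  have last: "last cs = cs ! (?L - 1)" using ne by (simp add: last_conv_nth)
  have hd: "hd cs = cs ! 0" using ne by (simp add: hd_conv_nth)
  define m where "m = Max (set cs)"
  have "m \<in> set cs" using ne m_def by simp
  then obtain q where q: "q < ?L" "cs ! q = m" by (auto simp: in_set_conv_nth)
  have le: "\<And>i. i < ?L \<Longrightarrow> cs ! i \<le> m" using m_def by simp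
  have nb: "cs ! i = m - 1 \<and> m \<ge> 1" if "i < ?L" "pathT n m (cs ! i) \<or> pathT n (cs ! i) m" for i
    using le[OF that(1)] that(2) by (auto simp: pathT_def)
  have "\<exists>i j. i < ?L \<and> j < ?L \<and> i \<noteq> j \<and> cs ! i = m - 1 \<and> cs ! j = m - 1"
  proof (cases "q = 0")
    case True
    have "pathT n m (cs ! 1)" using st[of 0] q True L3 by simp
    moreover have "pathT n (cs ! (?L - 1)) m" using lh last hd q True by simp
    ultimately show ?thesis using nb[of 1] nb[of "?L - 1"] L3
      by (rule_tac x=1 in exI, rule_tac x="?L - 1" in exI) auto
  next
    case False
    show ?thesis
    proof (cases "q = ?L - 1")
      case True
      have e: "Suc (?L - 2) = ?L - 1" using L3 by simp
      have "Suc (?L - 2) < ?L" using L3 by simp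
      then have "pathT n (cs ! (?L - 2)) (cs ! Suc (?L - 2))" by (rule st)
      then have "pathT n (cs ! (?L - 2)) m" using q True e by simp
      moreover have "pathT n m (cs ! 0)" using lh last hd q True by simp
      ultimately show ?thesis using nb[of 0] nb[of "?L - 2"] L3 ne
        by (rule_tac x=0 in exI, rule_tac x="?L - 2" in exI) auto
    next
      case F2: False
      have "pathT n (cs ! (q - 1)) m" using st[of "q - 1"] q False by simp
      moreover have "pathT n m (cs ! Suc q)" using st[of q] q F2 by simp
      ultimately show ?thesis using nb[of "q - 1"] nb[of "Suc q"] q F2 False
        by (rule_tac x="q - 1" in exI, rule_tac x="Suc q" in exI) auto
    qed
  qed
  then show False using dist by (metis nth_eq_iff_index_eq)
qed

lemma treewidth_from_path:
  fixes V :: "'a set" and E and B :: "nat \<Rightarrow> 'a set"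
  assumes n: "n \<ge> 1"
    and cover: "(\<Union>i<n. B i) = V"
    and edges: "\<And>u v. E u v \<Longrightarrow> \<exists>i<n. u \<in> B i \<and> v \<in> B i"
    and conv: "\<And>v i j l. i < n \<Longrightarrow> l < n \<Longrightarrow> v \<in> B i \<Longrightarrow> v \<in> B l \<Longrightarrow> i \<le> j \<Longrightarrow> j \<le> l \<Longrightarrow> v \<in> B j"
    and sz: "\<And>i. i < n \<Longrightarrow> card (B i) \<le> K"
  shows "treewidth V E \<le> K - 1"
proof -
  let ?N = "{..<n}"
  have tree: "is_tree ?N (pathT n)"
    unfolding is_tree_def simple_graph_def
  proof (intro conjI)
    show "connected_on {..<n} (pathT n)" unfolding connected_on_def
      by (intro ballI interval_conn[of "{..<n}" n]) auto
  qed (use n pathT_no_cycle in \<open>auto simp: pathT_def lessThan_empty_iff\<close>)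
  have td: "tree_decomposition V E ?N (pathT n) B"
    unfolding tree_decomposition_def
  proof (intro conjI tree allI impI ballI)
    show "(\<Union>i\<in>{..<n}. B i) = V" using cover by simp
  next
    fix u v assume "E u v" then show "\<exists>i\<in>{..<n}. u \<in> B i \<and> v \<in> B i" using edges by auto
  next
    fix v assume "v \<in> V"
    show "connected_on {i \<in> {..<n}. v \<in> B i} (pathT n)" unfolding connected_on_def
      by (intro ballI interval_conn[of _ n]) (use conv in auto)
  qed
  have "decomposition_width ?N B \<le> K - 1"
  proof -
    have "0 \<in> ?N" using n by simp
    then have "?N \<noteq> {}" by blast
    then show ?thesis
    unfolding decomposition_width_def using n sz
    by (intro diff_le_mono) (auto intro!: Max.boundedI)
  qed
  moreover have "treewidth V E \<le> decomposition_width ?N B"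
    unfolding treewidth_def by (rule Least_le) (use td in blast)
  ultimately show ?thesis by simp
qed

lemma pw_refl: "x \<in> S \<Longrightarrow> path_within E S x x"
  by (simp add: path_within_def)

lemma pw_step: "path_within E S x y \<Longrightarrow> E y z \<Longrightarrow> z \<in> S \<Longrightarrow> path_within E S x z"
  unfolding path_within_def by (auto intro: rtranclp.rtrancl_into_rtrancl)

lemma pw_trans: "path_within E S x y \<Longrightarrow> path_within E S y z \<Longrightarrow> path_within E S x z"
  unfolding path_within_def by auto

lemma pw_mono_set:
  assumes "path_within E S b v" "\<And>c. path_within E S b c \<Longrightarrow> c \<in> S'"
  shows "path_within E S' b v"
proof -
  have "b \<in> S" "v \<in> S" and r: "(\<lambda>a b. E a b \<and> a \<in> S \<and> b \<in> S)\<^sup>*\<^sup>* b v"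
    using assms(1) by (auto simp: path_within_def)
  have "(\<lambda>a b. E a b \<and> a \<in> S' \<and> b \<in> S')\<^sup>*\<^sup>* b v" using r assms(1)
  proof (induction rule: rtranclp_induct)
    case base then show ?case by simp
  next
    case (step y z)
    have "path_within E S b y" "path_within E S b z" using step \<open>b \<in> S\<close>
      by (auto simp: path_within_def intro: rtranclp.rtrancl_into_rtrancl)
    then have "y \<in> S'" "z \<in> S'" using assms(2) by auto
    have "(\<lambda>a b. E a b \<and> a \<in> S' \<and> b \<in> S')\<^sup>*\<^sup>* b y" using step.IH \<open>path_within E S b y\<close> by blast
    then show ?case using step \<open>y \<in> S'\<close> \<open>z \<in> S'\<close> by (auto intro: rtranclp.rtrancl_into_rtrancl)
  qed
  moreover have "b \<in> S'" "v \<in> S'" using assms(2) assms(1) pw_refl[OF \<open>b \<in> S\<close>] by auto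
  ultimately show ?thesis by (simp add: path_within_def)
qed

lemma pw_mono_E:
  assumes "path_within E1 S1 x y" "\<And>a b. E1 a b \<Longrightarrow> a \<in> S1 \<Longrightarrow> b \<in> S1 \<Longrightarrow> E2 a b" "S1 \<subseteq> S2"
  shows "path_within E2 S2 x y"
proof -
  have "(\<lambda>a b. E1 a b \<and> a \<in> S1 \<and> b \<in> S1)\<^sup>*\<^sup>* x y" using assms(1) by (simp add: path_within_def)
  then have "(\<lambda>a b. E2 a b \<and> a \<in> S2 \<and> b \<in> S2)\<^sup>*\<^sup>* x y"
    by (rule rtranclp_mono[THEN predicate2D, rotated]) (use assms in auto)
  then show ?thesis using assms by (auto simp: path_within_def)
qed

lemma N_iff: "u \<in> closed_nbhd V E w \<longleftrightarrow> u = w \<or> (u \<in> V \<and> E w u)"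
  by (auto simp: closed_nbhd_def)

context
  fixes V :: "'a set" and E :: "'a \<Rightarrow> 'a \<Rightarrow> bool"
  assumes sg: "simple_graph V E"
begin

lemma finV: "finite V" and Esym: "E u v \<Longrightarrow> E v u" and EV: "E u v \<Longrightarrow> u \<in> V" "E u v \<Longrightarrow> v \<in> V"
  and Eirr: "\<not> E u u"
  using sg by (auto simp: simple_graph_def)

lemma N_iff2: "u \<in> closed_nbhd V E w \<longleftrightarrow> u = w \<or> E w u"
  using EV by (auto simp: closed_nbhd_def)

lemma N_sym: "u \<in> closed_nbhd V E w \<longleftrightarrow> w \<in> closed_nbhd V E u"
  using Esym by (auto simp: N_iff2)

lemma pw_sym: "path_within E S x y \<Longrightarrow> path_within E S y x"
proof -
  assume a: "path_within E S x y"
  have "(\<lambda>a b. E a b \<and> a \<in> S \<and> b \<in> S)\<^sup>*\<^sup>* x y" using a by (simp add: path_within_def)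
  then have "(\<lambda>a b. E a b \<and> a \<in> S \<and> b \<in> S)\<^sup>*\<^sup>* y x"
  proof (induction rule: rtranclp_induct)
    case base then show ?case by simp
  next
    case (step y z) then show ?case
      by (auto intro: converse_rtranclp_into_rtranclp Esym)
  qed
  then show ?thesis using a by (simp add: path_within_def)
qed

lemma pw_V: "path_within E S x y \<Longrightarrow> S \<subseteq> V \<Longrightarrow> y \<in> V"
  by (auto simp: path_within_def)

lemma sep_mono:
  assumes "w \<in> V - closed_nbhd V E a" "\<not> path_within E (V - closed_nbhd V E a) b w"
    "path_within E (V - closed_nbhd V E a) b v"
  shows "path_within E (V - closed_nbhd V E w) b v"
proof (rule pw_mono_set[OF assms(3)])
  fix c assume c: "path_within E (V - closed_nbhd V E a) b c"
  have "c \<notin> closed_nbhd V E w"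
  proof
    assume "c \<in> closed_nbhd V E w"
    then have "c = w \<or> E c w" using Esym by (auto simp: N_iff2)
    then have "path_within E (V - closed_nbhd V E a) b w" using c assms(1) pw_step by metis
    then show False using assms(2) by simp
  qed
  then show "c \<in> V - closed_nbhd V E w" using c by (auto simp: path_within_def)
qed

definition Cc where "Cc a b = {v. path_within E (V - closed_nbhd V E a) b v}"

lemma Cc_sub: "Cc a b \<subseteq> V" by (auto simp: Cc_def path_within_def)
lemma Cc_fin: "finite (Cc a b)" using finite_subset[OF Cc_sub finV] .
lemma Cc_card: "card (Cc a b) \<le> card V" using card_mono[OF finV Cc_sub] .

lemma dom_pair:
  assumes at: "AT_free V E" and ne: "V \<noteq> {}"
  shows "\<exists>x\<in>V. \<exists>y\<in>V. \<forall>w\<in>V. \<not> path_within E (V - closed_nbhd V E w) x y"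
proof (cases "\<exists>a\<in>V. \<exists>b\<in>V. b \<notin> closed_nbhd V E a")
  case False
  obtain x where "x \<in> V" using ne by blast
  then show ?thesis using False N_sym by (auto simp: path_within_def)
next
  case True
  define P where "P = {(a, b). a \<in> V \<and> b \<in> V \<and> b \<notin> closed_nbhd V E a}"
  define f where "f = (\<lambda>(a, b). card (Cc a b) * (card V + 1) + card (Cc b a))"
  have Pfin: "finite P" using finV unfolding P_def
    by (rule_tac finite_subset[of _ "V \<times> V"]) auto
  have Pne: "P \<noteq> {}" using True by (auto simp: P_def)
  define M where "M = Max (f ` P)"
  have "M \<in> f ` P" using Pfin Pne M_def by simp
  then obtain x y where xy: "(x, y) \<in> P" "f (x, y) = M" by auto
  have maxf: "\<And>p. p \<in> P \<Longrightarrow> f p \<le> M" using Pfin M_def by simp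
  have xV: "x \<in> V" and yV: "y \<in> V" and yx: "y \<notin> closed_nbhd V E x" using xy by (auto simp: P_def)
  have "\<forall>w\<in>V. \<not> path_within E (V - closed_nbhd V E w) x y"
  proof (intro ballI notI)
    fix w assume wV: "w \<in> V" and pxy: "path_within E (V - closed_nbhd V E w) x y"
    have xw: "x \<notin> closed_nbhd V E w" and yw: "y \<notin> closed_nbhd V E w"
      using pxy by (auto simp: path_within_def)
    then have wx: "w \<notin> closed_nbhd V E x" and wy: "w \<notin> closed_nbhd V E y" using N_sym by auto
    have xy2: "x \<notin> closed_nbhd V E y" using yx N_sym by auto
    have "\<not> asteroidal_triple V E x y w" using at by (simp add: AT_free_def)
    moreover have "x \<noteq> y" "\<not> E x y" using yx by (auto simp: N_iff2)
    moreover have "y \<noteq> w" "\<not> E y w" using wy by (auto simp: N_iff2)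
    moreover have "x \<noteq> w" "\<not> E x w" using wx by (auto simp: N_iff2)
    moreover have "avoids_path V E x y w" using pxy by (simp add: avoids_path_def)
    ultimately have "\<not> avoids_path V E y w x \<or> \<not> avoids_path V E x w y"
      using xV yV wV unfolding asteroidal_triple_def by blast
    then have cases: "\<not> path_within E (V - closed_nbhd V E x) y w \<or> \<not> path_within E (V - closed_nbhd V E y) x w"
      by (simp add: avoids_path_def)
    have fxy: "f (x, y) \<le> card (Cc x y) * (card V + 1) + card V"
      using Cc_card[of y x] by (simp add: f_def)
    show False
    proof (cases "path_within E (V - closed_nbhd V E x) y w")
      case False
      have sub: "Cc x y \<subseteq> Cc w y" unfolding Cc_def
      proof (intro subsetI CollectI, drule CollectD)
        fix v assume "path_within E (V - closed_nbhd V E x) y v"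
        then show "path_within E (V - closed_nbhd V E w) y v"
          by (rule sep_mono[rotated 2]) (use False wV wx in auto)
      qed
      have "x \<in> Cc w y" using pxy pw_sym by (simp add: Cc_def)
      moreover have "x \<notin> Cc x y" by (auto simp: Cc_def path_within_def closed_nbhd_def)
      ultimately have "Cc x y \<subset> Cc w y" using sub by blast
      then have "card (Cc x y) < card (Cc w y)" using Cc_fin by (rule psubset_card_mono[rotated])
      then have "card (Cc x y) * (card V + 1) + card V < card (Cc w y) * (card V + 1)"
      proof -
        have "(card (Cc x y) + 1) * (card V + 1) \<le> card (Cc w y) * (card V + 1)"
          using \<open>card (Cc x y) < card (Cc w y)\<close> by (intro mult_le_mono1) simp
        moreover have "card (Cc x y) * (card V + 1) + card V < (card (Cc x y) + 1) * (card V + 1)" by simp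
        ultimately show ?thesis by linarith
      qed
      then have "f (x, y) < f (w, y)" using fxy by (simp add: f_def)
      moreover have "(w, y) \<in> P" using wV yV yw by (simp add: P_def)
      then have "f (w, y) \<le> M" by (rule maxf)
      ultimately show False using xy(2) by linarith
    next
      case True
      then have B: "\<not> path_within E (V - closed_nbhd V E y) x w" using cases by simp
      have eq: "Cc x w = Cc x y" unfolding Cc_def
      proof (intro set_eqI iffI, simp_all)
        fix v assume "path_within E (V - closed_nbhd V E x) w v"
        then show "path_within E (V - closed_nbhd V E x) y v" using True by (rule pw_trans[rotated])
      next
        fix v assume "path_within E (V - closed_nbhd V E x) y v"
        then show "path_within E (V - closed_nbhd V E x) w v" using pw_sym[OF True] by (rule pw_trans[rotated])
      qed
      have sub: "Cc y x \<subseteq> Cc w x" unfolding Cc_def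
      proof (intro subsetI CollectI, drule CollectD)
        fix v assume "path_within E (V - closed_nbhd V E y) x v"
        then show "path_within E (V - closed_nbhd V E w) x v"
          by (rule sep_mono[rotated 2]) (use B wV wy in auto)
      qed
      have "y \<in> Cc w x" using pxy by (simp add: Cc_def)
      moreover have "y \<notin> Cc y x" by (auto simp: Cc_def path_within_def closed_nbhd_def)
      ultimately have "Cc y x \<subset> Cc w x" using sub by blast
      then have "card (Cc y x) < card (Cc w x)" using Cc_fin by (rule psubset_card_mono[rotated])
      then have "f (x, y) < f (x, w)" using eq by (simp add: f_def)
      moreover have "(x, w) \<in> P" using wV xV wx by (simp add: P_def)
      then have "f (x, w) \<le> M" by (rule maxf)
      ultimately show False using xy(2) by linarith
    qed
  qed
  then show ?thesis using xV yV by blast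
qed

end

lemma pw_edge: "x \<in> S \<Longrightarrow> y \<in> S \<Longrightarrow> E x y \<Longrightarrow> path_within E S x y"
  by (auto simp: path_within_def intro: r_into_rtranclp)

lemma rp_comp: "(P ^^ m) a b \<Longrightarrow> (P ^^ n) b c \<Longrightarrow> (P ^^ (m + n)) a c"
  by (auto simp: relpowp_add)

lemma rp_sym:
  assumes sym: "\<And>u v. P u v \<Longrightarrow> P v u"
  shows "(P ^^ m) a b \<Longrightarrow> (P ^^ m) b a"
proof (induction m arbitrary: a b)
  case 0 then show ?case by simp
next
  case (Suc m)
  then obtain c where "(P ^^ m) a c" "P c b" by auto
  then show ?case using Suc.IH sym relpowp_Suc_I2 by metis
qed

context
  fixes V :: "'a set" and E :: "'a \<Rightarrow> 'a \<Rightarrow> bool" and k :: nat and p :: "nat \<Rightarrow> 'a" and D :: nat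
  assumes sg: "simple_graph V E"
    and pk: "\<And>i. i < k \<Longrightarrow> E (p i) (p (Suc i))"
    and pmin: "\<And>m. (E ^^ m) (p 0) (p k) \<Longrightarrow> k \<le> m"
    and pdom: "\<And>w. w \<in> V \<Longrightarrow> \<exists>i\<le>k. w \<in> closed_nbhd V E (p i)"
    and pV0: "p 0 \<in> V"
    and at: "AT_free V E"
    and deg: "\<And>v. v \<in> V \<Longrightarrow> card {u \<in> V. E v u} \<le> D"
    and D1: "D \<ge> 1"
begin

abbreviation NN where "NN z \<equiv> closed_nbhd V E z"

lemma pV: "i \<le> k \<Longrightarrow> p i \<in> V"
proof (cases i)
  case 0 then show ?thesis using pV0 by simp
next
  case (Suc j)
  assume "i \<le> k" then show ?thesis using pk[of j] Suc EV[OF sg] by auto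
qed

lemma walk_sub: "i \<le> j \<Longrightarrow> j \<le> k \<Longrightarrow> (E ^^ (j - i)) (p i) (p j)"
  unfolding relpowp_fun_conv
  by (rule exI[of _ "\<lambda>t. p (i + t)"]) (auto intro: pk)

lemma dist1: "a \<le> b \<Longrightarrow> b \<le> k \<Longrightarrow> (E ^^ m) (p a) (p b) \<Longrightarrow> b \<le> a + m"
proof -
  assume ab: "a \<le> b" "b \<le> k" "(E ^^ m) (p a) (p b)"
  have "(E ^^ (a - 0)) (p 0) (p a)" using walk_sub[of 0 a] ab by simp
  then have "(E ^^ (a + m)) (p 0) (p b)" using rp_comp ab by fastforce
  moreover have "(E ^^ (k - b)) (p b) (p k)" using walk_sub[of b k] ab by simp
  ultimately have "(E ^^ (a + m + (k - b))) (p 0) (p k)" using rp_comp by fastforce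
  then have "k \<le> a + m + (k - b)" using pmin by blast
  then show ?thesis using ab by linarith
qed

lemma dist: "a \<le> k \<Longrightarrow> b \<le> k \<Longrightarrow> (E ^^ m) (p a) (p b) \<Longrightarrow> b \<le> a + m \<and> a \<le> b + m"
proof -
  assume h: "a \<le> k" "b \<le> k" "(E ^^ m) (p a) (p b)"
  have h2: "(E ^^ m) (p b) (p a)" using rp_sym[of E m "p a" "p b"] Esym[OF sg] h(3) by blast
  show ?thesis
  proof (cases "a \<le> b")
    case True then show ?thesis using dist1[OF True h(2) h(3)] by simp
  next
    case False then show ?thesis using dist1[of b a m] h h2 by simp
  qed
qed

lemma nwalk: "u \<in> NN v \<Longrightarrow> \<exists>m\<le>1. (E ^^ m) v u \<and> (E ^^ m) u v"
proof -
  assume "u \<in> NN v"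
  then have "u = v \<or> E v u" by (simp add: N_iff2[OF sg])
  then show ?thesis
  proof
    assume "u = v" then show ?thesis by (intro exI[of _ 0]) simp
  next
    assume "E v u" then show ?thesis using Esym[OF sg] by (intro exI[of _ 1]) auto
  qed
qed

lemma pinj: "i \<le> k \<Longrightarrow> j \<le> k \<Longrightarrow> p i = p j \<Longrightarrow> i = j"
  using dist[of i j 0] by simp

lemma F1: "i \<le> k \<Longrightarrow> j \<le> k \<Longrightarrow> i + 2 \<le> j \<Longrightarrow> p j \<notin> NN (p i)"
proof
  assume h: "i \<le> k" "j \<le> k" "i + 2 \<le> j" "p j \<in> NN (p i)"
  then obtain m where "m \<le> 1" "(E ^^ m) (p i) (p j)" using nwalk by blast
  then show False using dist[OF h(1,2)] h(3) by fastforce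
qed

lemma F2: "i \<le> k \<Longrightarrow> j \<le> k \<Longrightarrow> v \<in> NN (p i) \<Longrightarrow> v \<in> NN (p j) \<Longrightarrow> j \<le> i + 2"
proof -
  assume h: "i \<le> k" "j \<le> k" "v \<in> NN (p i)" "v \<in> NN (p j)"
  obtain m1 where m1: "m1 \<le> 1" "(E ^^ m1) (p i) v" using nwalk h(3) by blast
  obtain m2 where m2: "m2 \<le> 1" "(E ^^ m2) v (p j)" using nwalk h(4) by blast
  have "(E ^^ (m1 + m2)) (p i) (p j)" using rp_comp m1 m2 by fastforce
  then show ?thesis using dist[OF h(1,2)] m1 m2 by fastforce
qed

lemma F3: "a \<le> k \<Longrightarrow> b \<le> k \<Longrightarrow> u \<in> NN (p a) \<Longrightarrow> v \<in> NN (p b) \<Longrightarrow> E u v \<Longrightarrow> b \<le> a + 3"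
proof -
  assume h: "a \<le> k" "b \<le> k" "u \<in> NN (p a)" "v \<in> NN (p b)" "E u v"
  obtain m1 where m1: "m1 \<le> 1" "(E ^^ m1) (p a) u" using nwalk h(3) by blast
  obtain m2 where m2: "m2 \<le> 1" "(E ^^ m2) v (p b)" using nwalk h(4) by blast
  have "(E ^^ (m1 + 1)) (p a) v" using relpowp_Suc_I[OF m1(2) h(5)] by simp
  then have "(E ^^ (m1 + 1 + m2)) (p a) (p b)" using rp_comp m2 by fastforce
  then show ?thesis using dist[OF h(1,2)] m1 m2 by fastforce
qed

lemma ATcase:
  assumes a3: "a + 3 \<le> k" and u: "u \<in> NN (p a)" and uv: "E u v"
    and v0: "v \<notin> NN (p a)" and v1: "v \<notin> NN (p (a + 1))" and v2: "v \<notin> NN (p (a + 2))"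
    and v3: "v \<in> NN (p (a + 3))" and u2: "u \<notin> NN (p (a + 2))"
  shows False
proof -
  have Vs: "p a \<in> V" "p (a+1) \<in> V" "p (a+2) \<in> V" "p (a+3) \<in> V" "v \<in> V" "u \<in> V"
    using pV[of a] pV[of "a+1"] pV[of "a+2"] pV[of "a+3"] a3 EV[OF sg, of u v] uv by simp_all
  have e01: "E (p a) (p (a+1))" and e12: "E (p (a+1)) (p (a+2))" and e23: "E (p (a+2)) (p (a+3))"
    using pk[of a] pk[of "a+1"] pk[of "a+2"] a3 by (simp_all add: eval_nat_numeral)
  have f02: "p (a+2) \<notin> NN (p a)" and f03: "p (a+3) \<notin> NN (p a)"
    using F1[of a "a+2"] F1[of a "a+3"] a3 by simp_all
  have f20: "p a \<notin> NN (p (a+2))" using f02 N_sym[OF sg] by blast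
  have nv: "p a \<notin> NN v" "p (a+1) \<notin> NN v" "p (a+2) \<notin> NN v"
    using v0 v1 v2 N_sym[OF sg] by blast+
  have ev3: "E (p (a+3)) v"
  proof -
    have "v \<noteq> p (a + 3)" using v2 e23 by (auto simp: N_iff2[OF sg])
    then show ?thesis using v3 by (simp add: N_iff2[OF sg])
  qed
  have A1: "avoids_path V E (p a) (p (a+2)) v"
    unfolding avoids_path_def
  proof -
    have "path_within E (V - NN v) (p a) (p (a+1))" using pw_edge[of "p a" "V - NN v" "p (a+1)" E] e01 Vs nv by blast
    moreover have "path_within E (V - NN v) (p (a+1)) (p (a+2))" using pw_edge[of "p (a+1)" "V - NN v" "p (a+2)" E] e12 Vs nv by blast
    ultimately show "path_within E (V - NN v) (p a) (p (a+2))" by (rule pw_trans)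
  qed
  have A2: "avoids_path V E (p (a+2)) v (p a)"
    unfolding avoids_path_def
  proof -
    have "path_within E (V - NN (p a)) (p (a+2)) (p (a+3))" using pw_edge[of "p (a+2)" "V - NN (p a)" "p (a+3)" E] e23 Vs f02 f03 by blast
    moreover have "path_within E (V - NN (p a)) (p (a+3)) v" using pw_edge[of "p (a+3)" "V - NN (p a)" v E] ev3 Vs f03 v0 by blast
    ultimately show "path_within E (V - NN (p a)) (p (a+2)) v" by (rule pw_trans)
  qed
  have A3: "avoids_path V E (p a) v (p (a+2))"
    unfolding avoids_path_def
  proof -
    have S: "p a \<in> V - NN (p (a+2))" "u \<in> V - NN (p (a+2))" "v \<in> V - NN (p (a+2))"
      using Vs f20 u2 v2 by auto
    have "path_within E (V - NN (p (a+2))) (p a) u"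
    proof (cases "u = p a")
      case True then show ?thesis using pw_refl[of "p a" "V - NN (p (a+2))" E] S by simp
    next
      case False
      then have "E (p a) u" using u by (simp add: N_iff2[OF sg])
      then show ?thesis using pw_edge[of "p a" "V - NN (p (a+2))" u E] S by blast
    qed
    moreover have "path_within E (V - NN (p (a+2))) u v" using pw_edge[of u "V - NN (p (a+2))" v E] uv S by blast
    ultimately show "path_within E (V - NN (p (a+2))) (p a) v" by (rule pw_trans)
  qed
  have "asteroidal_triple V E (p a) (p (a+2)) v"
  proof -
    have "p a \<noteq> p (a+2)" "\<not> E (p a) (p (a+2))" using f02 by (auto simp: N_iff2[OF sg])
    moreover have "p (a+2) \<noteq> v" "\<not> E (p (a+2)) v" using v2 by (auto simp: N_iff2[OF sg])
    moreover have "p a \<noteq> v" "\<not> E (p a) v" using v0 by (auto simp: N_iff2[OF sg])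
    ultimately show ?thesis unfolding asteroidal_triple_def using A1 A2 A3 Vs by blast
  qed
  then show False using at by (auto simp: AT_free_def)
qed

definition nb where "nb = (if k \<ge> 2 then k - 1 else 1)"
definition Bg where "Bg i = {v. \<exists>j. i \<le> j \<and> j \<le> i + 2 \<and> j \<le> k \<and> v \<in> NN (p j)}"

lemma nb1: "nb \<ge> 1" by (auto simp: nb_def)
lemma nbk: "k \<le> nb + 1" by (simp add: nb_def)
lemma pick: "a \<le> k \<Longrightarrow> b \<le> k \<Longrightarrow> a \<le> b \<Longrightarrow> b \<le> a + 2 \<Longrightarrow> \<exists>i<nb. i \<le> a \<and> b \<le> i + 2"
  by (rule exI[of _ "min a (nb - 1)"]) (auto simp: nb_def)

lemma Bg_cover: "(\<Union>i<nb. Bg i) = V"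
proof
  show "(\<Union>i<nb. Bg i) \<subseteq> V" using pV by (auto simp: Bg_def closed_nbhd_def)
next
  show "V \<subseteq> (\<Union>i<nb. Bg i)"
  proof
    fix w assume "w \<in> V"
    then obtain j where j: "j \<le> k" "w \<in> NN (p j)" using pdom by blast
    then obtain i where "i < nb" "i \<le> j" "j \<le> i + 2" using pick[of j j] by auto
    then show "w \<in> (\<Union>i<nb. Bg i)" using j by (auto simp: Bg_def)
  qed
qed

lemma Bg_edges: "E u v \<Longrightarrow> \<exists>i<nb. u \<in> Bg i \<and> v \<in> Bg i"
proof -
  assume uv: "E u v"
  have uV: "u \<in> V" and vV: "v \<in> V" using EV[OF sg] uv by auto
  show ?thesis
  proof (cases "\<exists>a b. a \<le> k \<and> b \<le> k \<and> u \<in> NN (p a) \<and> v \<in> NN (p b) \<and> a \<le> b + 2 \<and> b \<le> a + 2")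
    case True
    then obtain a b where ab: "a \<le> k" "b \<le> k" "u \<in> NN (p a)" "v \<in> NN (p b)" "a \<le> b + 2" "b \<le> a + 2"
      by blast
    show ?thesis
    proof (cases "a \<le> b")
      case True
      then obtain i where i: "i < nb" "i \<le> a" "b \<le> i + 2" using pick[of a b] ab by auto
      have ub: "u \<in> Bg i" unfolding Bg_def mem_Collect_eq by (rule exI[of _ a]) (use i ab True in auto)
      have vb: "v \<in> Bg i" unfolding Bg_def mem_Collect_eq by (rule exI[of _ b]) (use i ab True in auto)
      show ?thesis using ub vb i by blast
    next
      case False
      then obtain i where i: "i < nb" "i \<le> b" "a \<le> i + 2" using pick[of b a] ab by auto
      have ub: "u \<in> Bg i" unfolding Bg_def mem_Collect_eq by (rule exI[of _ a]) (use i ab False in auto)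
      have vb: "v \<in> Bg i" unfolding Bg_def mem_Collect_eq by (rule exI[of _ b]) (use i ab False in auto)
      show ?thesis using ub vb i by blast
    qed
  next
    case False
    then have far: "\<And>a b. a \<le> k \<Longrightarrow> b \<le> k \<Longrightarrow> u \<in> NN (p a) \<Longrightarrow> v \<in> NN (p b) \<Longrightarrow> b \<ge> a + 3 \<or> a \<ge> b + 3"
      by fastforce
    obtain a where a: "a \<le> k" "u \<in> NN (p a)" using pdom uV by blast
    obtain b where b: "b \<le> k" "v \<in> NN (p b)" using pdom vV by blast
    have "b \<le> a + 3" using F3 a b uv by blast
    moreover have "a \<le> b + 3" using F3[OF b(1) a(1) b(2) a(2)] uv Esym[OF sg] by blast
    ultimately have "b = a + 3 \<or> a = b + 3" using far[OF a(1) b(1) a(2) b(2)] by linarith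
    then show ?thesis
    proof
      assume e: "b = a + 3"
      have k3: "a + 3 \<le> k" using e b by simp
      have v0: "v \<notin> NN (p a)" using far[OF a(1) a(1) a(2)] by auto
      have v1: "v \<notin> NN (p (a+1))" using far[OF a(1) _ a(2), of "a+1"] k3 by auto
      have v2: "v \<notin> NN (p (a+2))" using far[OF a(1) _ a(2), of "a+2"] k3 by auto
      have v3: "v \<in> NN (p (a+3))" using b e by simp
      have u2: "u \<notin> NN (p (a+2))" using far[OF _ b(1) _ b(2), of "a+2"] k3 e by auto
      show ?thesis using ATcase[OF k3 a(2) uv v0 v1 v2 v3 u2] by simp
    next
      assume e: "a = b + 3"
      have k3: "b + 3 \<le> k" using e a by simp
      have vu: "E v u" using uv Esym[OF sg] by blast
      have v0: "u \<notin> NN (p b)" using far[OF b(1) b(1) _ b(2)] by auto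
      have v1: "u \<notin> NN (p (b+1))" using far[OF _ b(1) _ b(2), of "b+1"] k3 by auto
      have v2: "u \<notin> NN (p (b+2))" using far[OF _ b(1) _ b(2), of "b+2"] k3 by auto
      have v3: "u \<in> NN (p (b+3))" using a e by simp
      have u2: "v \<notin> NN (p (b+2))" using far[OF a(1) _ a(2), of "b+2"] k3 e by auto
      show ?thesis using ATcase[OF k3 b(2) vu v0 v1 v2 v3 u2] by simp
    qed
  qed
qed

lemma Bg_conv: "v \<in> Bg i \<Longrightarrow> v \<in> Bg l \<Longrightarrow> i \<le> j \<Longrightarrow> j \<le> l \<Longrightarrow> v \<in> Bg j"
proof -
  assume h: "v \<in> Bg i" "v \<in> Bg l" "i \<le> j" "j \<le> l"
  obtain s where s: "i \<le> s" "s \<le> i + 2" "s \<le> k" "v \<in> NN (p s)" using h(1) by (auto simp: Bg_def)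
  obtain t where t: "l \<le> t" "t \<le> l + 2" "t \<le> k" "v \<in> NN (p t)" using h(2) by (auto simp: Bg_def)
  show ?thesis
  proof (cases "s \<ge> j")
    case True then show ?thesis using s h by (auto simp: Bg_def)
  next
    case False
    have "t \<le> s + 2" using F2[OF s(3) t(3) s(4) t(4)] .
    then have "j \<le> t" "t \<le> j + 2" using False t h by linarith+
    then show ?thesis using t unfolding Bg_def by blast
  qed
qed

definition AA where "AA j = {u \<in> V. E (p j) u}"

lemma AA_card: "j \<le> k \<Longrightarrow> card (AA j) \<le> D" using deg pV by (simp add: AA_def)
lemma AA_fin: "finite (AA j)" using finV[OF sg] by (simp add: AA_def)

lemma Bg_card: "i < nb \<Longrightarrow> card (Bg i) \<le> 3 * D - 1"
proof -
  assume i: "i < nb"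
  show ?thesis
  proof (cases "i + 2 \<le> k")
    case True
    have sub: "Bg i \<subseteq> (AA i \<union> AA (i+2)) \<union> AA (i+1)"
    proof
      fix v assume "v \<in> Bg i"
      then obtain j where j: "i \<le> j" "j \<le> i + 2" "v \<in> NN (p j)" by (auto simp: Bg_def)
      then have "j = i \<or> j = i + 1 \<or> j = i + 2" by linarith
      moreover have "E (p (i+1)) (p i)" "E (p i) (p (i+1))" "E (p (i+1)) (p (i+2))"
        using pk[of i] pk[of "i+1"] True Esym[OF sg] by auto
      ultimately show "v \<in> (AA i \<union> AA (i+2)) \<union> AA (i+1)"
        using j pV True EV[OF sg] by (auto simp: AA_def N_iff2[OF sg])
    qed
    have "p (i+1) \<in> AA i \<inter> AA (i+2)"
      using pk[of i] pk[of "i+1"] True Esym[OF sg] pV[of "i+1"] by (auto simp: AA_def)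
    then have "card (AA i \<inter> AA (i+2)) \<ge> 1" using AA_fin
      by (metis One_nat_def Suc_leI card_gt_0_iff empty_iff finite_Int)
    moreover have "card (AA i) + card (AA (i+2)) = card (AA i \<union> AA (i+2)) + card (AA i \<inter> AA (i+2))"
      using card_Un_Int AA_fin by blast
    moreover have "card (AA i) \<le> D" "card (AA (i+2)) \<le> D" "card (AA (i+1)) \<le> D"
      using AA_card True by auto
    ultimately have c1: "card (AA i \<union> AA (i+2)) + card (AA (i+1)) \<le> 3 * D - 1" by linarith
    have "card (Bg i) \<le> card ((AA i \<union> AA (i+2)) \<union> AA (i+1))"
      using sub AA_fin by (intro card_mono) auto
    also have "\<dots> \<le> card (AA i \<union> AA (i+2)) + card (AA (i+1))" by (rule card_Un_le)
    finally show ?thesis using c1 by linarith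
  next
    case False
    then have k1: "k \<le> 1" "i = 0" using i by (auto simp: nb_def split: if_splits)
    show ?thesis
    proof (cases "k = 1")
      case True
      have "E (p 0) (p 1)" "E (p 1) (p 0)" using pk[of 0] True Esym[OF sg] by auto
      then have sub: "Bg i \<subseteq> AA 0 \<union> AA 1"
      proof (intro subsetI)
        fix v assume e: "E (p 0) (p 1)" "E (p 1) (p 0)" and "v \<in> Bg i"
        then obtain j where j: "j \<le> k" "v \<in> NN (p j)" by (auto simp: Bg_def)
        then have "j = 0 \<or> j = 1" using True by auto
        then show "v \<in> AA 0 \<union> AA 1" using j e EV[OF sg] by (auto simp: AA_def N_iff2[OF sg])
      qed
      have "card (Bg i) \<le> card (AA 0 \<union> AA 1)" using sub AA_fin by (intro card_mono) auto
      also have "\<dots> \<le> card (AA 0) + card (AA 1)" by (rule card_Un_le)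
      also have "\<dots> \<le> D + D" using AA_card True by (intro add_mono) auto
      finally show ?thesis using D1 by linarith
    next
      case False
      then have "k = 0" using k1 by simp
      have sub: "Bg i \<subseteq> insert (p 0) (AA 0)"
      proof (intro subsetI)
        fix v assume "v \<in> Bg i"
        then obtain j where j: "j \<le> k" "v \<in> NN (p j)" by (auto simp: Bg_def)
        then have "j = 0" using \<open>k = 0\<close> by auto
        then show "v \<in> insert (p 0) (AA 0)" using j EV[OF sg] by (auto simp: AA_def N_iff2[OF sg])
      qed
      have "card (Bg i) \<le> card (insert (p 0) (AA 0))" using sub AA_fin by (intro card_mono) auto
      also have "\<dots> \<le> Suc (card (AA 0))" by (rule card_insert_le_m1) (simp_all add: card_insert_if AA_fin)
      also have "\<dots> \<le> Suc D" using AA_card \<open>k = 0\<close> by auto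
      finally show ?thesis using D1 by linarith
    qed
  qed
qed

lemma path_dec: "\<exists>(n::nat) (B::nat \<Rightarrow> 'a set). n \<ge> 1 \<and> (\<Union>i<n. B i) = V \<and> (\<forall>u v. E u v \<longrightarrow> (\<exists>i<n. u \<in> B i \<and> v \<in> B i))
   \<and> (\<forall>v i j l. v \<in> B i \<longrightarrow> v \<in> B l \<longrightarrow> i \<le> j \<longrightarrow> j \<le> l \<longrightarrow> v \<in> B j)
   \<and> (\<forall>i<n. card (B i) \<le> 3 * D - 1)"
proof -
  have "nb \<ge> 1 \<and> (\<Union>i<nb. Bg i) = V \<and> (\<forall>u v. E u v \<longrightarrow> (\<exists>i<nb. u \<in> Bg i \<and> v \<in> Bg i))
   \<and> (\<forall>v i j l. v \<in> Bg i \<longrightarrow> v \<in> Bg l \<longrightarrow> i \<le> j \<longrightarrow> j \<le> l \<longrightarrow> v \<in> Bg j)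
   \<and> (\<forall>i<nb. card (Bg i) \<le> 3 * D - 1)"
  proof (intro conjI allI impI)
    show "nb \<ge> 1" by (rule nb1)
    show "(\<Union>i<nb. Bg i) = V" by (rule Bg_cover)
    show "\<And>u v. E u v \<Longrightarrow> \<exists>i<nb. u \<in> Bg i \<and> v \<in> Bg i" by (rule Bg_edges)
    show "\<And>v i j l. v \<in> Bg i \<Longrightarrow> v \<in> Bg l \<Longrightarrow> i \<le> j \<Longrightarrow> j \<le> l \<Longrightarrow> v \<in> Bg j" by (rule Bg_conv)
    show "\<And>i. i < nb \<Longrightarrow> card (Bg i) \<le> 3 * D - 1" by (rule Bg_card)
  qed
  then show ?thesis by blast
qed

end

lemma rtranclp_symI:
  assumes "\<And>u v. R u v \<Longrightarrow> R v u"
  shows "R\<^sup>*\<^sup>* a b \<Longrightarrow> R\<^sup>*\<^sup>* b a"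
proof (induction rule: rtranclp_induct)
  case base then show ?case by simp
next
  case (step y z) then show ?case using assms by (meson converse_rtranclp_into_rtranclp)
qed

lemma connected_case:
  fixes V :: "'a set" and E :: "'a \<Rightarrow> 'a \<Rightarrow> bool" and D :: nat
  assumes sg: "simple_graph V E" and at: "AT_free V E" and ne: "V \<noteq> {}"
    and conn': "\<forall>a\<in>V. \<forall>b\<in>V. E\<^sup>*\<^sup>* a b"
    and deg': "\<forall>v\<in>V. card {u \<in> V. E v u} \<le> D"
    and D1: "D \<ge> 1"
  shows "\<exists>(n::nat) (B::nat \<Rightarrow> 'a set). n \<ge> 1 \<and> (\<Union>i<n. B i) = V \<and> (\<forall>u v. E u v \<longrightarrow> (\<exists>i<n. u \<in> B i \<and> v \<in> B i))
   \<and> (\<forall>v i j l. v \<in> B i \<longrightarrow> v \<in> B l \<longrightarrow> i \<le> j \<longrightarrow> j \<le> l \<longrightarrow> v \<in> B j)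
   \<and> (\<forall>i<n. card (B i) \<le> 3 * D - 1)"
proof -
  have conn: "E\<^sup>*\<^sup>* a b" if "a \<in> V" "b \<in> V" for a b using conn' that by blast
  have deg: "card {u \<in> V. E v u} \<le> D" if "v \<in> V" for v using deg' that by blast
  obtain x y where xV: "x \<in> V" and yV: "y \<in> V"
    and dp: "\<And>w. w \<in> V \<Longrightarrow> \<not> path_within E (V - closed_nbhd V E w) x y"
    using dom_pair[OF sg at ne] by blast
  have "\<exists>m. (E ^^ m) x y" using conn[OF xV yV] by (simp add: rtranclp_power)
  define k where "k = (LEAST m. (E ^^ m) x y)"
  have kw: "(E ^^ k) x y" unfolding k_def using \<open>\<exists>m. (E ^^ m) x y\<close> by (rule LeastI_ex)
  then obtain p where p0: "p 0 = x" and pkk: "p k = y" and pk: "\<And>i. i < k \<Longrightarrow> E (p i) (p (Suc i))"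
    unfolding relpowp_fun_conv by blast
  have pmin: "k \<le> m" if "(E ^^ m) (p 0) (p k)" for m
  proof -
    have "(E ^^ m) x y" using that p0 pkk by simp
    then show ?thesis unfolding k_def by (rule Least_le)
  qed
  have pVV: "p i \<in> V" if "i \<le> k" for i
  proof (cases "i < k")
    case True then show ?thesis using pk[OF True] EV[OF sg] by blast
  next
    case False then have "i = k" using that by simp
    then show ?thesis using pkk yV by simp
  qed
  have pdom: "\<exists>i\<le>k. w \<in> closed_nbhd V E (p i)" if wV: "w \<in> V" for w
  proof (rule ccontr)
    assume "\<not> (\<exists>i\<le>k. w \<in> closed_nbhd V E (p i))"
    then have nin: "\<And>i. i \<le> k \<Longrightarrow> p i \<in> V - closed_nbhd V E w"
      using pVV N_sym[OF sg] by blast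
    have "path_within E (V - closed_nbhd V E w) (p 0) (p i)" if "i \<le> k" for i
      using that
    proof (induction i)
      case 0 then show ?case using nin[of 0] by (simp add: pw_refl)
    next
      case (Suc i)
      then have "path_within E (V - closed_nbhd V E w) (p 0) (p i)" by simp
      then show ?case using pw_step[of E "V - closed_nbhd V E w" "p 0" "p i" "p (Suc i)"] pk[of i] nin[of "Suc i"] Suc.prems
        by simp
    qed
    then have "path_within E (V - closed_nbhd V E w) x y" using p0 pkk by fastforce
    then show False using dp[OF wV] by simp
  qed
  show ?thesis
    by (rule path_dec[OF sg pk pmin pdom _ at deg D1]) (use p0 xV in auto)
qed

lemma AT_free_induced:
  fixes V :: "'a set" and E :: "'a \<Rightarrow> 'a \<Rightarrow> bool"
  assumes at: "AT_free V E" and CV: "C \<subseteq> V"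
  shows "AT_free C (\<lambda>u v. E u v \<and> u \<in> C \<and> v \<in> C)"
proof -
  let ?EC = "\<lambda>u v. E u v \<and> u \<in> C \<and> v \<in> C"
  have av: "avoids_path V E a b z" if "avoids_path C ?EC a b z" "z \<in> C" for a b z
  proof -
    have "path_within ?EC (C - closed_nbhd C ?EC z) a b" using that by (simp add: avoids_path_def)
    then have "path_within E (V - closed_nbhd V E z) a b"
      by (rule pw_mono_E) (use CV \<open>z \<in> C\<close> in \<open>auto simp: closed_nbhd_def\<close>)
    then show ?thesis by (simp add: avoids_path_def)
  qed
  show ?thesis unfolding AT_free_def
  proof
    assume "\<exists>x y z. asteroidal_triple C ?EC x y z"
    then obtain x y z where t: "asteroidal_triple C ?EC x y z" by blast
    have "asteroidal_triple V E x y z"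
      using t av CV unfolding asteroidal_triple_def by blast
    then show False using at by (auto simp: AT_free_def)
  qed
qed

lemma all_dec:
  fixes V :: "'a set" and E :: "'a \<Rightarrow> 'a \<Rightarrow> bool" and D :: nat
  assumes sg: "simple_graph V E" and at: "AT_free V E"
    and deg': "\<forall>v\<in>V. card {u \<in> V. E v u} \<le> D"
    and D1: "D \<ge> 1"
  shows "U \<subseteq> V \<Longrightarrow> (\<forall>u v. E u v \<longrightarrow> u \<in> U \<longrightarrow> v \<in> U) \<Longrightarrow>
   \<exists>(n::nat) (B::nat \<Rightarrow> 'a set). n \<ge> 1 \<and> (\<Union>i<n. B i) = U \<and> (\<forall>u v. E u v \<longrightarrow> u \<in> U \<longrightarrow> (\<exists>i<n. u \<in> B i \<and> v \<in> B i))
   \<and> (\<forall>v i j l. i < n \<longrightarrow> l < n \<longrightarrow> v \<in> B i \<longrightarrow> v \<in> B l \<longrightarrow> i \<le> j \<longrightarrow> j \<le> l \<longrightarrow> v \<in> B j)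
   \<and> (\<forall>i<n. card (B i) \<le> 3 * D - 1)"
proof (induction "card U" arbitrary: U rule: less_induct)
  case less
  have deg: "card {u \<in> V. E v u} \<le> D" if "v \<in> V" for v using deg' that by blast
  note UV = less.prems(1) and clo = less.prems(2)
  show ?case
  proof (cases "U = {}")
    case True
    show ?thesis
      by (rule exI[of _ "1::nat"], rule exI[of _ "\<lambda>_. {}"]) (use True in auto)
  next
    case False
    then obtain x where xU: "x \<in> U" by blast
    define C where "C = {v. E\<^sup>*\<^sup>* x v}"
    have CU: "C \<subseteq> U"
    proof
      fix v assume "v \<in> C"
      then have "E\<^sup>*\<^sup>* x v" by (simp add: C_def)
      then show "v \<in> U"
        by (induction rule: rtranclp_induct) (use xU clo in auto)
    qed
    have xC: "x \<in> C" by (simp add: C_def)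
    have Cclo: "v \<in> C" if "u \<in> C" "E u v" for u v
      using that by (auto simp: C_def intro: rtranclp.rtrancl_into_rtrancl)
    have Cclo2: "u \<in> C" if "v \<in> C" "E u v" for u v
      using Cclo[OF that(1)] that Esym[OF sg] by blast
    define EC where "EC = (\<lambda>u v. E u v \<and> u \<in> C \<and> v \<in> C)"
    have CV: "C \<subseteq> V" using CU UV by blast
    have finV: "finite V" using finV[OF sg] .
    have sgC: "simple_graph C EC"
      using Esym[OF sg] Eirr[OF sg] finite_subset[OF CV finV] unfolding simple_graph_def EC_def by blast
    have atC: "AT_free C EC" unfolding EC_def by (rule AT_free_induced[OF at CV])
    have neC: "C \<noteq> {}" using xC by blast
    have toEC: "EC\<^sup>*\<^sup>* x v" if "E\<^sup>*\<^sup>* x v" for v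
      using that
    proof (induction rule: rtranclp_induct)
      case base then show ?case by simp
    next
      case (step y z)
      have "y \<in> C" "z \<in> C" using step by (auto simp: C_def intro: rtranclp.rtrancl_into_rtrancl)
      then have "EC y z" using step by (simp add: EC_def)
      then show ?case using step by (meson rtranclp.rtrancl_into_rtrancl)
    qed
    have ECsym: "\<And>u v. EC u v \<Longrightarrow> EC v u" using Esym[OF sg] by (auto simp: EC_def)
    have connC: "\<forall>a\<in>C. \<forall>b\<in>C. EC\<^sup>*\<^sup>* a b"
    proof (intro ballI)
      fix a b assume that: "a \<in> C" "b \<in> C"
      have "EC\<^sup>*\<^sup>* x a" "EC\<^sup>*\<^sup>* x b" using that toEC by (auto simp: C_def)
      then have "EC\<^sup>*\<^sup>* a x" "EC\<^sup>*\<^sup>* x b" using rtranclp_symI[of EC, OF ECsym] by blast+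
      then show "EC\<^sup>*\<^sup>* a b" by simp
    qed
    have degC: "\<forall>v\<in>C. card {u \<in> C. EC v u} \<le> D"
    proof
      fix v assume that: "v \<in> C"
      have "card {u \<in> C. EC v u} \<le> card {u \<in> V. E v u}"
        using CV finV by (intro card_mono) (auto simp: EC_def)
      also have "\<dots> \<le> D" using deg that CV by blast
      finally show "card {u \<in> C. EC v u} \<le> D" .
    qed
    obtain n1 and B1 :: "nat \<Rightarrow> 'a set" where n1: "n1 \<ge> 1" and cov1: "(\<Union>i<n1. B1 i) = C"
      and ed1': "\<forall>u v. EC u v \<longrightarrow> (\<exists>i<n1. u \<in> B1 i \<and> v \<in> B1 i)"
      and cv1': "\<forall>v i j l. v \<in> B1 i \<longrightarrow> v \<in> B1 l \<longrightarrow> i \<le> j \<longrightarrow> j \<le> l \<longrightarrow> v \<in> B1 j"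
      and cd1': "\<forall>i<n1. card (B1 i) \<le> 3 * D - 1"
      using connected_case[OF sgC atC neC connC degC D1] by (elim exE conjE) blast
    have ed1: "\<exists>i<n1. u \<in> B1 i \<and> v \<in> B1 i" if "EC u v" for u v using ed1' that by blast
    have cv1: "v \<in> B1 j" if "v \<in> B1 i" "v \<in> B1 l" "i \<le> j" "j \<le> l" for v i j l using cv1' that by blast
    have cd1: "card (B1 i) \<le> 3 * D - 1" if "i < n1" for i using cd1' that by blast
    define U' where "U' = U - C"
    have U'V: "U' \<subseteq> V" using UV by (auto simp: U'_def)
    have clo': "\<forall>u v. E u v \<longrightarrow> u \<in> U' \<longrightarrow> v \<in> U'"
      using clo Cclo2 by (auto simp: U'_def)
    have fU: "finite U" using finite_subset[OF UV finV] .
    have cU: "card U' < card U" unfolding U'_def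
      using xU xC fU by (intro psubset_card_mono) auto
    obtain n2 and B2 :: "nat \<Rightarrow> 'a set" where n2: "n2 \<ge> 1" and cov2: "(\<Union>i<n2. B2 i) = U'"
      and ed2': "\<forall>u v. E u v \<longrightarrow> u \<in> U' \<longrightarrow> (\<exists>i<n2. u \<in> B2 i \<and> v \<in> B2 i)"
      and cv2': "\<forall>v i j l. i < n2 \<longrightarrow> l < n2 \<longrightarrow> v \<in> B2 i \<longrightarrow> v \<in> B2 l \<longrightarrow> i \<le> j \<longrightarrow> j \<le> l \<longrightarrow> v \<in> B2 j"
      and cd2': "\<forall>i<n2. card (B2 i) \<le> 3 * D - 1"
      using less.hyps[OF cU U'V clo'] by (elim exE conjE) blast
    have ed2: "\<exists>i<n2. u \<in> B2 i \<and> v \<in> B2 i" if "E u v" "u \<in> U'" for u v using ed2' that by blast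
    have cv2: "v \<in> B2 j" if "i < n2" "l < n2" "v \<in> B2 i" "v \<in> B2 l" "i \<le> j" "j \<le> l" for v i j l
      using cv2' that by blast
    have cd2: "card (B2 i) \<le> 3 * D - 1" if "i < n2" for i using cd2' that by blast
    define B where "B = (\<lambda>i. if i < n1 then B1 i else B2 (i - n1))"
    have s1: "B1 i \<subseteq> C" if "i < n1" for i using cov1 that by blast
    have s2: "B2 i \<subseteq> U'" if "i < n2" for i using cov2 that by blast
    have "n1 + n2 \<ge> 1" using n1 by simp
    moreover have "(\<Union>i<n1 + n2. B i) = U"
    proof
      show "(\<Union>i<n1 + n2. B i) \<subseteq> U"
      proof
        fix v assume "v \<in> (\<Union>i<n1 + n2. B i)"
        then obtain i where i: "i < n1 + n2" "v \<in> B i" by blast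
        show "v \<in> U"
        proof (cases "i < n1")
          case True then show ?thesis using i s1 CU by (auto simp: B_def)
        next
          case False
          then have "i - n1 < n2" "v \<in> B2 (i - n1)" using i by (auto simp: B_def)
          then show ?thesis using s2[of "i - n1"] by (auto simp: U'_def)
        qed
      qed
    next
      show "U \<subseteq> (\<Union>i<n1 + n2. B i)"
      proof
        fix v assume vU: "v \<in> U"
        show "v \<in> (\<Union>i<n1 + n2. B i)"
        proof (cases "v \<in> C")
          case True
          then obtain i where "i < n1" "v \<in> B1 i" using cov1 by blast
          then show ?thesis by (auto simp: B_def intro!: bexI[of _ i])
        next
          case False
          then have "v \<in> U'" using vU by (simp add: U'_def)
          then obtain i where "i < n2" "v \<in> B2 i" using cov2 by blast
          then show ?thesis by (auto simp: B_def intro!: bexI[of _ "n1 + i"])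
        qed
      qed
    qed
    moreover have "\<forall>u v. E u v \<longrightarrow> u \<in> U \<longrightarrow> (\<exists>i<n1 + n2. u \<in> B i \<and> v \<in> B i)"
    proof (intro allI impI)
      fix u v assume uv: "E u v" and uU: "u \<in> U"
      show "\<exists>i<n1 + n2. u \<in> B i \<and> v \<in> B i"
      proof (cases "u \<in> C")
        case True
        then have "EC u v" using Cclo[OF True uv] uv by (simp add: EC_def)
        then obtain i where "i < n1" "u \<in> B1 i" "v \<in> B1 i" using ed1 by blast
        then show ?thesis by (auto simp: B_def intro!: exI[of _ i])
      next
        case False
        then have "u \<in> U'" using uU by (simp add: U'_def)
        then obtain i where "i < n2" "u \<in> B2 i" "v \<in> B2 i" using ed2 uv by blast
        then show ?thesis by (auto simp: B_def intro!: exI[of _ "n1 + i"])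
      qed
    qed
    moreover have "\<forall>v i j l. i < n1 + n2 \<longrightarrow> l < n1 + n2 \<longrightarrow> v \<in> B i \<longrightarrow> v \<in> B l \<longrightarrow> i \<le> j \<longrightarrow> j \<le> l \<longrightarrow> v \<in> B j"
    proof (intro allI impI)
      fix v i j l assume h: "i < n1 + n2" "l < n1 + n2" "v \<in> B i" "v \<in> B l" "i \<le> j" "j \<le> l"
      show "v \<in> B j"
      proof (cases "l < n1")
        case True
        then have "i < n1" "j < n1" using h by auto
        then show ?thesis using h True cv1[of v i l j] by (simp add: B_def)
      next
        case lF: False
        show ?thesis
        proof (cases "i < n1")
          case True
          have "v \<in> C" using s1[OF True] h(3) True by (auto simp: B_def)
          moreover have "v \<in> U'"
          proof -
            have "l - n1 < n2" using h(2) lF by simp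
            moreover have "v \<in> B2 (l - n1)" using h(4) lF by (simp add: B_def)
            ultimately show ?thesis using s2[of "l - n1"] by blast
          qed
          ultimately show ?thesis by (simp add: U'_def)
        next
          case False
          then have "\<not> j < n1" using h by auto
          then show ?thesis using h False lF cv2[of "i - n1" "l - n1" v "j - n1"] by (simp add: B_def)
        qed
      qed
    qed
    moreover have "\<forall>i<n1 + n2. card (B i) \<le> 3 * D - 1"
      using cd1 cd2 by (auto simp: B_def)
    ultimately show ?thesis
      by (intro exI[where x="n1 + n2"] exI[where x=B]) blast
  qed
qed

theorem lemma12:
  fixes V :: "'a set" and E :: "'a \<Rightarrow> 'a \<Rightarrow> bool"
  assumes "simple_graph V E"
    and "AT_free V E"
    and "max_degree V E \<ge> 1"
  shows "treewidth V E \<le> 3 * max_degree V E - 2"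
proof -
  let ?D = "max_degree V E"
  have ne: "V \<noteq> {}" using assms(3) by (auto simp: max_degree_def)
  have fin: "finite V" using finV[OF assms(1)] .
  have deg: "\<forall>v\<in>V. card {u \<in> V. E v u} \<le> ?D"
  proof
    fix v assume that: "v \<in> V"
    have "degree V E v \<le> Max (degree V E ` V)" using fin that by simp
    then show "card {u \<in> V. E v u} \<le> ?D" using ne by (simp add: max_degree_def degree_def)
  qed
  obtain n and B :: "nat \<Rightarrow> 'a set" where n: "n \<ge> 1" and cov: "(\<Union>i<n. B i) = V"
      and ed: "\<forall>u v. E u v \<longrightarrow> u \<in> V \<longrightarrow> (\<exists>i<n. u \<in> B i \<and> v \<in> B i)"
      and cv: "\<forall>v i j l. i < n \<longrightarrow> l < n \<longrightarrow> v \<in> B i \<longrightarrow> v \<in> B l \<longrightarrow> i \<le> j \<longrightarrow> j \<le> l \<longrightarrow> v \<in> B j"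
      and cd: "\<forall>i<n. card (B i) \<le> 3 * ?D - 1"
  proof -
    have clo: "\<forall>u v. E u v \<longrightarrow> u \<in> V \<longrightarrow> v \<in> V" using EV[OF assms(1)] by blast
    show ?thesis using all_dec[OF assms(1) assms(2) deg assms(3), of V, OF subset_refl clo] that
      by (elim exE conjE) blast
  qed
  have "treewidth V E \<le> (3 * ?D - 1) - 1"
  proof (rule treewidth_from_path[OF n cov])
    fix u v assume "E u v"
    then show "\<exists>i<n. u \<in> B i \<and> v \<in> B i" using ed EV[OF assms(1)] by blast
  next
    fix v i j l assume "i < n" "l < n" "v \<in> B i" "v \<in> B l" "i \<le> j" "j \<le> l"
    then show "v \<in> B j" using cv by blast
  next
    fix i assume "i < n" then show "card (B i) \<le> 3 * ?D - 1" using cd by blast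
  qed
  then show ?thesis by simp
qed

end
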